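(* For every $n$-variable Boolean function $f$ it holds that $NN(f)\le(1+o(1))\frac{2^{n+2}}{n}$, where $o(1)$ denotes a quantity depending only on $n$ that tends to $0$ as $n\to\infty$.
   Context: For a Boolean function $f:\{0,1\}^n\to\{0,1\}$, a nearest neighbor representation is a pair of disjoint sets $(P,N)$ of points of $\mathbb R^n$ such that for every $a\in\{0,1\}^n$: if $f(a)=1$, there is $b\in P$ with $d(a,b)<d(a,c)$ for all $c\in N$; if $f(a)=0$, there is $b\in N$ with $d(a,b)<d(a,c)$ for all $c\in P$ ($d$ = Euclidean distance). $NN(f)$ is the minimum of $|P\cup N|$ over all nearest neighbor representations of $f$. *)

theory Defs
  imports Complex_Main
begin

text \<open>A Boolean function is a predicate on
the cube (its values outside the cube are irrelevant).\<close>

definition bcube :: "nat \<Rightarrow> real list set" where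
  "bcube n = {a. length a = n \<and> set a \<subseteq> {0, 1}}"

definition edist :: "real list \<Rightarrow> real list \<Rightarrow> real" where
  "edist a b = sqrt (\<Sum>i<length a. (a ! i - b ! i)^2)"

definition is_nn_rep :: "nat \<Rightarrow> (real list \<Rightarrow> bool) \<Rightarrow> real list set \<Rightarrow> real list set \<Rightarrow> bool" where
  "is_nn_rep n f P N \<longleftrightarrow>
     finite P \<and> finite N \<and> P \<inter> N = {} \<and>
     (\<forall>x\<in>P \<union> N. length x = n) \<and>
     (\<forall>a\<in>bcube n.
        (f a \<longrightarrow> (\<exists>b\<in>P. \<forall>c\<in>N. edist a b < edist a c)) \<and>
        (\<not> f a \<longrightarrow> (\<exists>b\<in>N. \<forall>c\<in>P. edist a b < edist a c)))"

definition NN :: "nat \<Rightarrow> (real list \<Rightarrow> bool) \<Rightarrow> nat" where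
  "NN n f = (LEAST k. \<exists>P N. is_nn_rep n f P N \<and> card (P \<union> N) = k)"

end

theory Submission
  imports Defs
begin
unbundle bit_operations_syntax

definition flip :: "real list \<Rightarrow> nat \<Rightarrow> real list" where
  "flip v i = v[i := 1 - v!i]"

fun synr :: "real list \<Rightarrow> nat \<Rightarrow> nat" where
  "synr x 0 = 0"
| "synr x (Suc i) = synr x i XOR (if x!i = 1 then Suc i else 0)"

lemma flip_flip: "flip (flip x j) j = x"
  unfolding flip_def by (cases "j < length x") (auto simp: list_update_beyond)

lemma flip_bcube: "x \<in> bcube n \<Longrightarrow> j < n \<Longrightarrow> flip x j \<in> bcube n"
proof -
  assume x: "x \<in> bcube n" and j: "j < n"
  then have "x!j \<in> {0,1}" unfolding bcube_def by (auto dest: nth_mem)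
  then have "1 - x!j \<in> {0,1::real}" by auto
  then show ?thesis using x j unfolding flip_def bcube_def
    by (auto dest!: set_update_subset_insert[THEN subsetD])
qed

lemma bcube_nth: "x \<in> bcube n \<Longrightarrow> i < n \<Longrightarrow> x!i = 0 \<or> x!i = 1"
  unfolding bcube_def by (auto dest: nth_mem)

lemma synr_flip:
  assumes "x \<in> bcube n" "j < n"
  shows "synr (flip x j) i = (if j < i then synr x i XOR Suc j else synr x i)"
proof (induction i)
  case 0 then show ?case by simp
next
  case (Suc i)
  have len: "length x = n" using assms bcube_def by auto
  show ?case
  proof (cases "i = j")
    case True
    have "x!j = 0 \<or> x!j = 1" using bcube_nth assms by auto
    then show ?thesis
    proof
      assume "x!j = 0"
      then show ?thesis using Suc True len assms by (simp add: flip_def)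
    next
      assume "x!j = 1"
      then show ?thesis using Suc True len assms by (simp add: flip_def xor.assoc)
    qed
  next
    case False
    have "flip x j ! i = x ! i" using False by (simp add: flip_def)
    then show ?thesis using Suc False
      by (auto simp: xor.assoc xor.commute xor.left_commute)
  qed
qed

lemma synr_bound: "i < 2^k \<Longrightarrow> synr x i < 2^k"
proof (induction i)
  case 0 then show ?case by simp
next
  case (Suc i)
  have a: "synr x i < 2^k" using Suc by simp
  have b: "(if x!i = 1 then Suc i else 0) < (2::nat)^k" using Suc by simp
  have "take_bit k (synr x i XOR (if x!i = 1 then Suc i else 0)) = synr x i XOR (if x!i = 1 then Suc i else 0)"
    using take_bit_nat_eq_self[OF a] take_bit_nat_eq_self[OF b] by (simp only: take_bit_xor)
  then show ?case unfolding synr.simps(2) take_bit_nat_eq_self_iff[symmetric] .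
qed

lemma card_bcube: "card (bcube n) = 2^n" and finite_bcube: "finite (bcube n)"
proof -
  have e: "bcube n = {xs. set xs \<subseteq> {0,1::real} \<and> length xs = n}" unfolding bcube_def by auto
  show "card (bcube n) = 2^n" unfolding e by (simp add: card_lists_length_eq numeral_2_eq_2)
  show "finite (bcube n)" unfolding e by (simp add: finite_lists_length_eq)
qed

lemma code_exists:
  assumes "m = 2^k - 1" "m \<le> n"
  shows "\<exists>V \<subseteq> bcube n. card V * 2^k = 2^n \<and>
     (\<forall>x\<in>bcube n. \<exists>v\<in>V. x = v \<or> (\<exists>j<n. x = flip v j))"
proof -
  define F where "F r = {x \<in> bcube n. synr x m = r}" for r
  have fin: "finite (F r)" for r unfolding F_def using finite_bcube by auto
  have eq: "card (F r) = card (F 0)" if r: "0 < r" "r < 2^k" for r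
  proof -
    have j: "r - 1 < m" "r - 1 < n" using r assms by auto
    have "bij_betw (\<lambda>x. flip x (r-1)) (F 0) (F r)"
    proof (rule bij_betw_byWitness[where f' = "\<lambda>x. flip x (r-1)"])
      show "\<forall>a\<in>F 0. flip (flip a (r - 1)) (r - 1) = a" by (simp add: flip_flip)
      show "\<forall>a\<in>F r. flip (flip a (r - 1)) (r - 1) = a" by (simp add: flip_flip)
      show "(\<lambda>x. flip x (r - 1)) ` F 0 \<subseteq> F r"
        using j r by (auto simp: F_def flip_bcube synr_flip)
      show "(\<lambda>x. flip x (r - 1)) ` F r \<subseteq> F 0"
        using j r by (auto simp: F_def flip_bcube synr_flip)
    qed
    then show ?thesis by (simp add: bij_betw_same_card)
  qed
  have mk: "m < 2^k" using assms by simp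
  have un: "bcube n = (\<Union>r\<in>{..<2^k}. F r)"
    using synr_bound[OF mk] by (auto simp: F_def)
  have "card (bcube n) = (\<Sum>r<2^k. card (F r))"
    unfolding un by (rule card_UN_disjoint) (simp_all add: fin, auto simp: F_def)
  also have "\<dots> = (\<Sum>r<(2::nat)^k. card (F 0))"
  proof (rule sum.cong)
    fix r assume "r \<in> {..<(2::nat)^k}"
    then have "r < 2^k" by simp
    then show "card (F r) = card (F 0)" 
    proof (cases "r = 0")
      case False then show ?thesis using eq[of r] \<open>r < 2^k\<close> by simp
    qed simp
  qed simp
  finally have s: "card (bcube n) = (\<Sum>r<(2::nat)^k. card (F 0))" .
  have s2: "(\<Sum>r<(2::nat)^k. card (F 0)) = 2^k * card (F 0)" by simp
  have c: "card (F 0) * 2^k = 2^n" using s s2 card_bcube[of n] by (simp only: mult.commute)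
  have cov: "\<exists>v\<in>F 0. x = v \<or> (\<exists>j<n. x = flip v j)" if x: "x \<in> bcube n" for x
  proof (cases "synr x m = 0")
    case True then show ?thesis using x by (auto simp: F_def)
  next
    case False
    define j where "j = synr x m - 1"
    have jb: "j < m" using synr_bound[OF mk, of x] False assms unfolding j_def by simp
    have "synr (flip x j) m = 0" using synr_flip[OF x, of j m] jb assms False
      unfolding j_def by simp
    then have "flip x j \<in> F 0" using flip_bcube[OF x, of j] jb assms by (simp add: F_def)
    moreover have "x = flip (flip x j) j" by (simp add: flip_flip)
    moreover have "j < n" using jb assms by simp
    ultimately show ?thesis by blast
  qed
  have sub: "F 0 \<subseteq> bcube n" by (auto simp: F_def)
  show ?thesis using c cov sub by blast
qed


definition Dsq :: "real list \<Rightarrow> real list \<Rightarrow> real" where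
  "Dsq a b = (\<Sum>i<length a. (a!i - b!i)^2)"

definition wv :: "(real list \<Rightarrow> bool) \<Rightarrow> real list \<Rightarrow> nat \<Rightarrow> real" where
  "wv f v i = (if f (flip v i) then 1 else -1) * (1 - 2 * v!i)"

definition tv :: "real \<Rightarrow> (real list \<Rightarrow> bool) \<Rightarrow> real list \<Rightarrow> bool \<Rightarrow> real" where
  "tv e f v b = e * (if f v = b then 1/2 else 1) * (if b then 1 else -1)"

definition qv :: "real \<Rightarrow> (real list \<Rightarrow> bool) \<Rightarrow> nat \<Rightarrow> real list \<Rightarrow> bool \<Rightarrow> real list" where
  "qv e f n v b = map (\<lambda>i. v!i + tv e f v b * wv f v i) [0..<n]"

lemma edist_Dsq: "edist a b = sqrt (Dsq a b)"
  by (simp add: edist_def Dsq_def)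

lemma Dsq_qv: "a \<in> bcube n \<Longrightarrow>
   Dsq a (qv e f n v b) = (\<Sum>i<n. (a!i - v!i - tv e f v b * wv f v i)^2)"
  unfolding Dsq_def qv_def bcube_def by (auto intro!: sum.cong simp: algebra_simps)

lemma coord_lb:
  fixes x y t w :: real
  assumes "x \<in> {0,1}" "y \<in> {0,1}" "x \<noteq> y" "w^2 = 1"
  shows "(x - y - t*w)^2 \<ge> 1 - 2*\<bar>t\<bar>"
proof -
  have w: "w = 1 \<or> w = -1" using assms(4) by (metis power2_eq_1_iff)
  have xy: "x - y = 1 \<or> x - y = -1" using assms(1-3) by auto
  from w xy show ?thesis by (auto simp: power2_eq_square algebra_simps abs_if)
qed

lemma sum_lb1:
  fixes t :: real and w :: "nat \<Rightarrow> real"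
  assumes "\<forall>i<n. a!i \<in> {0,1}" "\<forall>i<n. v!i \<in> {0,1}" "\<forall>i<n. (w i)^2 = 1"
    "j < n" "a!j \<noteq> v!j"
  shows "(\<Sum>i<n. (a!i - v!i - t*w i)^2) \<ge> 1 - 2*\<bar>t\<bar>"
proof -
  have "1 - 2*\<bar>t\<bar> \<le> (\<Sum>i\<in>{j}. (a!i - v!i - t*w i)^2)"
    using coord_lb[of "a!j" "v!j" "w j" t] assms by simp
  also have "\<dots> \<le> (\<Sum>i<n. (a!i - v!i - t*w i)^2)"
    by (rule sum_mono2) (use assms in auto)
  finally show ?thesis .
qed

lemma sum_lb2:
  fixes t :: real and w :: "nat \<Rightarrow> real"
  assumes "\<forall>i<n. a!i \<in> {0,1}" "\<forall>i<n. v!i \<in> {0,1}" "\<forall>i<n. (w i)^2 = 1"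
    "j < n" "a!j \<noteq> v!j" "i0 < n" "a!i0 \<noteq> v!i0" "i0 \<noteq> j"
  shows "(\<Sum>i<n. (a!i - v!i - t*w i)^2) \<ge> 2 - 4*\<bar>t\<bar>"
proof -
  have "2 - 4*\<bar>t\<bar> \<le> (\<Sum>i\<in>{j,i0}. (a!i - v!i - t*w i)^2)"
    using coord_lb[of "a!j" "v!j" "w j" t] coord_lb[of "a!i0" "v!i0" "w i0" t] assms by simp
  also have "\<dots> \<le> (\<Sum>i<n. (a!i - v!i - t*w i)^2)"
    by (rule sum_mono2) (use assms in auto)
  finally show ?thesis .
qed

lemma sum_ex0:
  fixes t :: real and w :: "nat \<Rightarrow> real"
  assumes "\<forall>i<n. (w i)^2 = 1" "\<forall>i<n. a!i = v!i"
  shows "(\<Sum>i<n. (a!i - v!i - t*w i)^2) = real n * t^2"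
proof -
  have "(\<Sum>i<n. (a!i - v!i - t*w i)^2) = (\<Sum>i<n. t^2)"
    using assms by (intro sum.cong) (auto simp: power_mult_distrib)
  then show ?thesis by simp
qed

lemma sum_ex1:
  fixes t :: real and w :: "nat \<Rightarrow> real"
  assumes "\<forall>i<n. (w i)^2 = 1" "j < n" "\<forall>i<n. i \<noteq> j \<longrightarrow> a!i = v!i" "(a!j - v!j)^2 = 1"
  shows "(\<Sum>i<n. (a!i - v!i - t*w i)^2) = real n * t^2 + 1 - 2*t*(a!j - v!j)*w j"
proof -
  have "(\<Sum>i<n. (a!i - v!i - t*w i)^2) = (a!j - v!j - t*w j)^2 + (\<Sum>i\<in>{..<n}-{j}. (a!i - v!i - t*w i)^2)"
    using assms(2) by (subst sum.remove[of _ j]) auto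
  also have "(\<Sum>i\<in>{..<n}-{j}. (a!i - v!i - t*w i)^2) = (\<Sum>i\<in>{..<n}-{j}. t^2)"
    using assms by (intro sum.cong) (auto simp: power_mult_distrib)
  also have "\<dots> = (real n - 1) * t^2" using assms(2) by (simp add: of_nat_diff)
  also have "(a!j - v!j - t*w j)^2 = (a!j - v!j)^2 - 2*t*(a!j - v!j)*w j + t^2 * (w j)^2"
    by (simp add: power2_eq_square algebra_simps)
  finally show ?thesis using assms(1,2,4) by (simp add: algebra_simps)
qed


lemma wv_sq: "v \<in> bcube n \<Longrightarrow> i < n \<Longrightarrow> (wv f v i)^2 = 1"
  using bcube_nth[of v n i] by (auto simp: wv_def power2_eq_square)

lemma tv_abs: "e \<ge> 0 \<Longrightarrow> \<bar>tv e f v b\<bar> \<le> e"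
  by (auto simp: tv_def abs_mult)

lemma tv_sq: "(tv e f v b)^2 = (if f v = b then e^2/4 else e^2)"
  by (auto simp: tv_def power2_eq_square)

lemma bc01: "x \<in> bcube n \<Longrightarrow> \<forall>i<n. x!i \<in> {0,1}"
  using bcube_nth by auto

lemma bcube_len: "x \<in> bcube n \<Longrightarrow> length x = n"
  by (simp add: bcube_def)

lemma differ: "a \<in> bcube n \<Longrightarrow> v \<in> bcube n \<Longrightarrow> a \<noteq> v \<Longrightarrow> \<exists>j<n. a!j \<noteq> v!j"
  using nth_equalityI[of a v] bcube_len by metis

lemma center_val:
  assumes "v \<in> bcube n"
  shows "Dsq v (qv e f n v b) = real n * (tv e f v b)^2"
  unfolding Dsq_qv[OF assms]
  by (rule sum_ex0) (auto intro: wv_sq[OF assms])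

lemma far_val:
  assumes "a \<in> bcube n" "v \<in> bcube n" "a \<noteq> v" "0 \<le> e" "e \<le> 1/4"
  shows "Dsq a (qv e f n v b) \<ge> 1 - 2*e"
proof -
  obtain j where j: "j < n" "a!j \<noteq> v!j" using differ assms by blast
  have "Dsq a (qv e f n v b) \<ge> 1 - 2*\<bar>tv e f v b\<bar>"
    unfolding Dsq_qv[OF assms(1)]
    by (rule sum_lb1[OF bc01[OF assms(1)] bc01[OF assms(2)] _ j]) (auto intro: wv_sq[OF assms(2)])
  then show ?thesis using tv_abs[OF assms(4), of f v b] by linarith
qed

lemma flip_nth: "j < length v \<Longrightarrow> flip v j ! i = (if i = j then 1 - v!j else v!i)"
  by (simp add: flip_def)

lemma flip_val:
  assumes "v \<in> bcube n" "j < n" "a = flip v j"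
  shows "Dsq a (qv e f n v b) = real n * (tv e f v b)^2 + 1
            - 2 * tv e f v b * (if f a then 1 else -1)"
proof -
  have len: "length v = n" using assms bcube_len by auto
  have vj: "v!j = 0 \<or> v!j = 1" using bcube_nth assms by auto
  have ab: "a \<in> bcube n" using flip_bcube assms by simp
  have eq1: "Dsq a (qv e f n v b) = real n * (tv e f v b)^2 + 1 - 2 * tv e f v b * (a!j - v!j) * wv f v j"
    unfolding Dsq_qv[OF ab]
    by (rule sum_ex1) (use assms len vj wv_sq[OF assms(1)] in \<open>auto simp: flip_nth\<close>)
  have eq2: "(a!j - v!j) * wv f v j = (if f a then 1 else -1)"
    using assms len vj by (auto simp: flip_nth wv_def)
  have eq3: "2 * tv e f v b * (a!j - v!j) * wv f v j = 2 * tv e f v b * ((a!j - v!j) * wv f v j)"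
    by (simp only: mult.assoc)
  show ?thesis using eq1 unfolding eq3 eq2 .
qed

lemma key:
  assumes V: "V \<subseteq> bcube n" "\<forall>x\<in>bcube n. \<exists>v\<in>V. x = v \<or> (\<exists>j<n. x = flip v j)"
    and n: "n \<ge> 1" and e: "e = 1 / (4 * real n)" and a: "a \<in> bcube n"
  shows "\<exists>v0\<in>V. \<forall>v\<in>V. Dsq a (qv e f n v0 (f a)) < Dsq a (qv e f n v (\<not> f a))"
proof -
  have rn: "real n \<ge> 1" using n by simp
  have e0: "0 < e" "e \<le> 1/4" using rn unfolding e by (auto simp: field_simps)
  have ne: "real n * e = 1/4" using n e by simp
  have ne2: "real n * e^2 = e/4" using ne by (simp add: power2_eq_square)
  show ?thesis
  proof (cases "a \<in> V")
    case True
    have c: "Dsq a (qv e f n a (f a)) = e/4/4"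
      using center_val[OF a] tv_sq ne2 by simp
    show ?thesis
    proof (intro bexI[OF _ True] ballI)
      fix v assume v: "v \<in> V"
      show "Dsq a (qv e f n a (f a)) < Dsq a (qv e f n v (\<not> f a))"
      proof (cases "v = a")
        case True
        then have "Dsq a (qv e f n v (\<not> f a)) = e/4" using center_val[OF a] tv_sq ne2 by simp
        then show ?thesis using c e0 by simp
      next
        case False
        then have "Dsq a (qv e f n v (\<not> f a)) \<ge> 1 - 2*e"
          using far_val[OF a _ _ less_imp_le[OF e0(1)] e0(2)] v V by auto
        then show ?thesis using c e0 by simp
      qed
    qed
  next
    case False
    obtain v0 j where v0: "v0 \<in> V" "j < n" "a = flip v0 j" using V a False by blast
    have v0b: "v0 \<in> bcube n" using v0 V by auto
    have c: "Dsq a (qv e f n v0 (f a)) < 1"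
    proof -
      have "Dsq a (qv e f n v0 (f a)) = real n * (tv e f v0 (f a))^2 + 1
            - 2 * tv e f v0 (f a) * (if f a then 1 else -1)"
        by (rule flip_val[OF v0b v0(2,3)])
      moreover have "real n * (tv e f v0 (f a))^2 \<le> e/4" using ne2 tv_sq[of e f v0 "f a"] e0
        by auto
      moreover have "tv e f v0 (f a) * (if f a then 1 else -1) \<ge> e/2"
        using e0 by (auto simp: tv_def)
      ultimately show ?thesis using e0 by linarith
    qed
    show ?thesis
    proof (intro bexI[OF _ v0(1)] ballI)
      fix v assume v: "v \<in> V"
      have vb: "v \<in> bcube n" using v V by auto
      have av: "a \<noteq> v" using v False by auto
      obtain j' where j': "j' < n" "a!j' \<noteq> v!j'" using differ[OF a vb av] by blast
      have "Dsq a (qv e f n v (\<not> f a)) \<ge> 1"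
      proof (cases "a = flip v j'")
        case True
        have "Dsq a (qv e f n v (\<not> f a)) = real n * (tv e f v (\<not> f a))^2 + 1
            - 2 * tv e f v (\<not> f a) * (if f a then 1 else -1)"
          by (rule flip_val[OF vb j'(1) True])
        moreover have "tv e f v (\<not> f a) * (if f a then 1 else -1) \<le> 0"
          using e0 by (auto simp: tv_def)
        moreover have "real n * (tv e f v (\<not> f a))^2 \<ge> 0" by simp
        ultimately show ?thesis by linarith
      next
        case False
        have lens: "length a = n" "length (flip v j') = n" using a vb j' flip_bcube bcube_len by auto
        obtain i0 where i0: "i0 < n" "a!i0 \<noteq> flip v j' ! i0"
          using differ[OF a flip_bcube[OF vb j'(1)] False] by blast
        have vj': "v!j' = 0 \<or> v!j' = 1" "a!j' = 0 \<or> a!j' = 1" using bcube_nth a vb j' by auto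
        have "i0 \<noteq> j'"
        proof
          assume "i0 = j'"
          then show False using i0 j' vj' lens bcube_len[OF vb] by (auto simp: flip_nth)
        qed
        then have i0': "a!i0 \<noteq> v!i0" using i0 j' bcube_len[OF vb] by (simp add: flip_nth)
        have "Dsq a (qv e f n v (\<not> f a)) \<ge> 2 - 4*\<bar>tv e f v (\<not> f a)\<bar>"
          unfolding Dsq_qv[OF a]
          by (rule sum_lb2[OF bc01[OF a] bc01[OF vb] _ j' i0(1) i0' \<open>i0 \<noteq> j'\<close>])
             (auto intro: wv_sq[OF vb])
        then show ?thesis using tv_abs[of e f v "\<not> f a"] e0 by linarith
      qed
      then show "Dsq a (qv e f n v0 (f a)) < Dsq a (qv e f n v (\<not> f a))" using c by linarith
    qed
  qed
qed


lemma main_bound: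
  assumes n: "n \<ge> 1"
  shows "real (NN n f) \<le> 2 ^ (n + 2) / real n"
proof -
  obtain k where k: "2^k \<le> n+1" "n+1 < 2^(k+1)" using ex_power_ivl1[of 2 "n+1"] by auto
  define m :: nat where "m = 2^k - 1"
  have mn: "m \<le> n" using k unfolding m_def by simp
  obtain V where V: "V \<subseteq> bcube n" "card V * 2^k = 2^n"
     "\<forall>x\<in>bcube n. \<exists>v\<in>V. x = v \<or> (\<exists>j<n. x = flip v j)"
    using code_exists[OF m_def mn] by blast
  have finV: "finite V" using V(1) finite_bcube finite_subset by blast
  define e where "e = 1 / (4 * real n)"
  have rn: "real n \<ge> 1" using n by simp
  have e0: "0 < e" "e \<le> 1/4" using rn unfolding e_def by (auto simp: field_simps)
  have ne: "real n * e = 1/4" using n e_def by simp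
  have ne2: "real n * e^2 = e/4" using ne by (simp add: power2_eq_square)
  define P where "P = (\<lambda>v. qv e f n v True) ` V"
  define N where "N = (\<lambda>v. qv e f n v False) ` V"
  have disj: "P \<inter> N = {}"
  proof (rule ccontr)
    assume "P \<inter> N \<noteq> {}"
    then obtain v v' where vv: "v \<in> V" "v' \<in> V" "qv e f n v True = qv e f n v' False"
      unfolding P_def N_def by blast
    have vb: "v \<in> bcube n" "v' \<in> bcube n" using vv V by auto
    have c1: "Dsq v (qv e f n v True) = real n * (tv e f v True)^2" by (rule center_val[OF vb(1)])
    show False
    proof (cases "v = v'")
      case True
      have c2: "Dsq v (qv e f n v False) = real n * (tv e f v False)^2" by (rule center_val[OF vb(1)])
      have "(tv e f v True)^2 \<noteq> (tv e f v False)^2" using e0 by (auto simp: tv_sq)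
      then show False using c1 c2 vv True rn by auto
    next
      case False
      have "Dsq v (qv e f n v' False) \<ge> 1 - 2*e"
        using far_val[OF vb(1) vb(2) False less_imp_le[OF e0(1)] e0(2)] .
      moreover have "real n * (tv e f v True)^2 \<le> e/4" using ne2 tv_sq[of e f v True] e0 by auto
      ultimately show False using c1 vv e0 by auto
    qed
  qed
  have rep: "is_nn_rep n f P N"
    unfolding is_nn_rep_def
  proof (intro conjI ballI)
    show "finite P" "finite N" unfolding P_def N_def using finV by auto
    show "P \<inter> N = {}" by (rule disj)
    show "length x = n" if "x \<in> P \<union> N" for x using that unfolding P_def N_def qv_def by auto
  next
    fix a assume a: "a \<in> bcube n"
    obtain v0 where v0: "v0 \<in> V" "\<forall>v\<in>V. Dsq a (qv e f n v0 (f a)) < Dsq a (qv e f n v (\<not> f a))"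
      using key[OF V(1) V(3) n e_def a] by blast
    have lt: "edist a (qv e f n v0 (f a)) < edist a (qv e f n v (\<not> f a))" if "v \<in> V" for v
      using v0(2) that by (simp add: edist_Dsq)
    show "f a \<longrightarrow> (\<exists>b\<in>P. \<forall>c\<in>N. edist a b < edist a c)"
    proof
      assume fa: "f a"
      show "\<exists>b\<in>P. \<forall>c\<in>N. edist a b < edist a c"
        using lt fa v0(1) unfolding P_def N_def by auto
    qed
    show "\<not> f a \<longrightarrow> (\<exists>b\<in>N. \<forall>c\<in>P. edist a b < edist a c)"
    proof
      assume fa: "\<not> f a"
      show "\<exists>b\<in>N. \<forall>c\<in>P. edist a b < edist a c"
        using lt fa v0(1) unfolding P_def N_def by auto
    qed
  qed
  have "NN n f \<le> card (P \<union> N)"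
    unfolding NN_def by (rule Least_le) (use rep in blast)
  also have "\<dots> \<le> card P + card N" by (rule card_Un_le)
  also have "\<dots> \<le> card V + card V" unfolding P_def N_def
    by (intro add_mono card_image_le finV)
  finally have nn: "NN n f \<le> 2 * card V" by simp
  have "NN n f * n \<le> 2 * card V * (2 * 2^k)"
    using nn k(2) by (intro mult_mono) auto
  also have "\<dots> = 4 * (card V * 2^k)" by simp
  also have "\<dots> = 2^(n+2)" using V(2) by simp
  finally have "real (NN n f) * real n \<le> 2^(n+2)"
    by (metis of_nat_le_iff of_nat_mult of_nat_numeral of_nat_power)
  then show ?thesis using rn by (simp add: field_simps)
qed

theorem theorem3:
  shows "\<exists>eps :: nat \<Rightarrow> real. eps \<longlonglongrightarrow> 0 \<and>
           (\<forall>n \<ge> 1. \<forall>f :: real list \<Rightarrow> bool.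
              real (NN n f) \<le> (1 + eps n) * 2 ^ (n + 2) / real n)"
proof (intro exI[of _ "\<lambda>_. 0"] conjI allI impI)
  show "(\<lambda>_. 0::real) \<longlonglongrightarrow> 0" by simp
  fix n :: nat and f :: "real list \<Rightarrow> bool"
  assume "n \<ge> 1"
  from main_bound[OF this, of f] show "real (NN n f) \<le> (1 + 0) * 2 ^ (n + 2) / real n" by simp
qed

end
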